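(* Let $R$ be a commutative ring with identity, $n>1$, $S=M_n(R)$. If $A_1,A_2$ are vertices of the orthogonality graph $O(S)$ with $d(A_1,A_2)>3$, then $\operatorname{Ann}(\det A_1)=\operatorname{Ann}(\det A_2)$, and this ideal $I$ has no zero-divisors in the sense that $xy\ne0$ for all nonzero $x,y\in I$.
   Context: The orthogonality graph $O(S)$ of a ring $S$ is the undirected graph whose vertices are the nonzero two-sided zero-divisors of $S$, distinct vertices $x,y$ being adjacent iff $xy=yx=0$; $d$ is the graph distance. $\operatorname{Ann}(a)=\{x\in R: ax=0\}$. *)

theory Defs
  imports "HOL-Analysis.Analysis"
begin

text \<open>Matrices over R of size n are 'a^'n^'n with product (**); note that (*) on this type is
entrywise, so all ring notions for S = M_n(R) are stated with (**).\<close>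

text \<open>Nonzero two-sided zero-divisor of S = M_n(R): the vertices of O(S).\<close>
definition two_sided_zd :: "('a::comm_ring_1)^'n^'n \<Rightarrow> bool" where
  "two_sided_zd A \<longleftrightarrow> A \<noteq> 0 \<and> (\<exists>B::'a^'n^'n. B \<noteq> 0 \<and> A ** B = 0) \<and> (\<exists>C::'a^'n^'n. C \<noteq> 0 \<and> C ** A = 0)"

definition orth_adj :: "('a::comm_ring_1)^'n^'n \<Rightarrow> ('a::comm_ring_1)^'n^'n \<Rightarrow> bool" where
  "orth_adj A B \<longleftrightarrow> two_sided_zd A \<and> two_sided_zd B \<and> A \<noteq> B \<and> A ** B = 0 \<and> B ** A = 0"

text \<open>Graph distance in O(S), infinity if no path exists.\<close>
definition orth_dist :: "('a::comm_ring_1)^'n^'n \<Rightarrow> ('a::comm_ring_1)^'n^'n \<Rightarrow> enat" where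
  "orth_dist A B = (INF k \<in> {k. (orth_adj ^^ k) A B}. enat k)"

definition ann :: "'a::comm_ring_1 \<Rightarrow> 'a set" where
  "ann a = {x. a * x = 0}"

end

theory Submission
  imports Defs
begin

definition updr :: "('a::comm_ring_1)^'n^'n \<Rightarrow> 'n \<Rightarrow> 'a^'n \<Rightarrow> 'a^'n^'n" where
  "updr N k z = (\<chi> r. if r = k then z else N $ r)"

definition adjm :: "('a::comm_ring_1)^'n^'n \<Rightarrow> 'a^'n^'n" where
  "adjm N = (\<chi> j k. det (updr N k (axis j 1)))"

definition outer :: "('a::comm_ring_1)^'n \<Rightarrow> 'a^'n \<Rightarrow> 'a^'n^'n" where
  "outer y z = (\<chi> i j. y$i * z$j)"

lemma det_rank1_aux:
  fixes N :: "'a::comm_ring_1^'n^'n"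
  assumes "finite T"
  shows "det (\<chi> r. if r \<in> T then N$r + y$r *s z else N$r) = det N + (\<Sum>k\<in>T. y$k * det (updr N k z))"
  using assms
proof (induction T arbitrary: N rule: finite_induct)
  case empty
  then show ?case by simp
next
  case (insert k T)
  let ?M = "(\<chi> r. if r \<in> T then N$r + y$r *s z else N$r) :: 'a^'n^'n"
  have e1: "(\<chi> r. if r \<in> insert k T then N$r + y$r *s z else N$r) =
     (\<chi> r. if r = k then N$k + y$k *s z else ?M $ r)"
    using insert by (auto simp: vec_eq_iff)
  have e2: "(\<chi> r. if r = k then N$k else ?M $ r) = ?M"
    using insert by (auto simp: vec_eq_iff)
  have e3: "(\<chi> r. if r = k then z else ?M $ r) =
     (\<chi> r. if r \<in> T then (updr N k z)$r + y$r *s z else (updr N k z)$r)"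
    using insert by (auto simp: vec_eq_iff updr_def)
  have z0: "det (updr (updr N k z) r z) = 0" if "r \<in> T" for r
  proof -
    have "r \<noteq> k" using insert that by auto
    then show ?thesis
      by (intro det_identical_rows[of r k]) (auto simp: row_def updr_def vec_eq_iff)
  qed
  have "det (\<chi> r. if r \<in> insert k T then N$r + y$r *s z else N$r)
     = det ?M + y$k * det (\<chi> r. if r = k then z else ?M $ r)"
    unfolding e1 det_row_add det_row_mul e2 ..
  also have "\<dots> = det N + (\<Sum>r\<in>T. y$r * det (updr N r z)) + y$k * det (updr N k z)"
    unfolding e3 insert.IH using z0 by simp
  finally show ?case using insert by (simp add: algebra_simps)
qed

lemma det_row_lin:
  fixes N :: "'a::comm_ring_1^'n^'n"
  shows "det (updr N k z) = (\<Sum>j\<in>UNIV. z$j * det (updr N k (axis j 1)))"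
proof -
  have zz: "(\<Sum>j\<in>UNIV. z$j *s axis j 1) = z"
    by (simp add: vec_eq_iff sum_component axis_def if_distrib cong: if_cong)
  have "updr N k z = (\<chi> i. if i = k then (\<Sum>j\<in>UNIV. z$j *s axis j 1) else N$i)"
    unfolding updr_def by (simp only: zz)
  then have "det (updr N k z) = (\<Sum>j\<in>UNIV. det (\<chi> i. if i = k then z$j *s axis j 1 else N$i))"
    by (simp add: det_linear_row_sum)
  also have "\<dots> = (\<Sum>j\<in>UNIV. z$j * det (updr N k (axis j 1)))"
    unfolding det_row_mul updr_def ..
  finally show ?thesis .
qed

lemma det_rank1:
  fixes N :: "'a::comm_ring_1^'n^'n"
  shows "det (N + outer y z) = det N + (\<Sum>j\<in>UNIV. \<Sum>k\<in>UNIV. z$j * adjm N$j$k * y$k)"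
proof -
  have "N + outer y z = (\<chi> r. if r \<in> UNIV then N$r + y$r *s z else N$r)"
    by (simp add: vec_eq_iff outer_def)
  then have "det (N + outer y z) = det N + (\<Sum>k\<in>UNIV. y$k * det (updr N k z))"
    using det_rank1_aux[of UNIV N y z] by simp
  also have "\<dots> = det N + (\<Sum>k\<in>UNIV. \<Sum>j\<in>UNIV. z$j * adjm N$j$k * y$k)"
    by (simp add: det_row_lin[of N _ z] adjm_def sum_distrib_left algebra_simps)
  also have "\<dots> = det N + (\<Sum>j\<in>UNIV. \<Sum>k\<in>UNIV. z$j * adjm N$j$k * y$k)"
    by (subst sum.swap) simp
  finally show ?thesis .
qed

lemma mul_adjm:
  fixes A :: "'a::comm_ring_1^'n^'n"
  shows "(A ** adjm A) $ i $ m = (if i = m then det A else 0)"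
proof -
  have "(A ** adjm A) $ i $ m = (\<Sum>k\<in>UNIV. A$i$k * det (updr A m (axis k 1)))"
    by (simp add: matrix_matrix_mult_def adjm_def)
  also have "\<dots> = det (updr A m (A$i))"
    by (simp add: det_row_lin[of A m "A$i"])
  also have "\<dots> = (if i = m then det A else 0)"
  proof (cases "i = m")
    case True
    then have "updr A m (A$i) = A" by (simp add: updr_def vec_eq_iff)
    then show ?thesis using True by simp
  next
    case False
    then show ?thesis
      by (simp, intro det_identical_rows[of i m]) (auto simp: row_def updr_def vec_eq_iff)
  qed
  finally show ?thesis .
qed


definition lowrank :: "'n set \<Rightarrow> ('a::comm_ring_1)^'n^'n \<Rightarrow> 'a^'n^'n \<Rightarrow> 'a^'n^'n" where
  "lowrank S Y Z = (\<chi> i j. \<Sum>s\<in>S. Y$i$s * Z$s$j)"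

definition KL :: "'a \<Rightarrow> ('a::comm_ring_1)^'n^'n \<Rightarrow> nat \<Rightarrow> bool" where
  "KL x A k \<longleftrightarrow> (\<forall>W S Y Z. card S \<le> k \<longrightarrow> x * det (W ** A + lowrank S Y Z) = 0)"

definition KR :: "'a \<Rightarrow> ('a::comm_ring_1)^'n^'n \<Rightarrow> nat \<Rightarrow> bool" where
  "KR x A k \<longleftrightarrow> (\<forall>W S Y Z. card S \<le> k \<longrightarrow> x * det (A ** W + lowrank S Y Z) = 0)"

lemma lowrank_split:
  assumes "s0 \<in> S"
  shows "lowrank S Y Z = lowrank (S - {s0}) Y Z + outer (\<chi> i. Y$i$s0) (\<chi> j. Z$s0$j)"
  using assms by (simp add: vec_eq_iff lowrank_def outer_def sum.remove)

lemma lowrank_empty: "lowrank {} Y Z = 0"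
  by (simp add: vec_eq_iff lowrank_def)

lemma lowrank_UNIV: "lowrank UNIV Y Z = Y ** Z"
  by (simp add: vec_eq_iff lowrank_def matrix_matrix_mult_def)

lemma KL_mono: "KL x A k \<Longrightarrow> KL (t * x) A k"
  unfolding KL_def by (metis mult.assoc mult_zero_right)

lemma KR_mono: "KR x A k \<Longrightarrow> KR (t * x) A k"
  unfolding KR_def by (metis mult.assoc mult_zero_right)

lemma KL_big:
  fixes A :: "'a::comm_ring_1^'n^'n"
  assumes "KL x A k" "CARD('n) \<le> k" shows "x = 0"
proof -
  have "x * det ((0::'a^'n^'n) ** A + lowrank UNIV (mat 1) (mat 1)) = 0"
    using assms unfolding KL_def by blast
  moreover have "(0::'a^'n^'n) ** A = 0" by (simp add: vec_eq_iff matrix_matrix_mult_def)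
  ultimately show ?thesis by (simp add: lowrank_UNIV)
qed

lemma KR_big:
  fixes A :: "'a::comm_ring_1^'n^'n"
  assumes "KR x A k" "CARD('n) \<le> k" shows "x = 0"
proof -
  have "x * det (A ** (0::'a^'n^'n) + lowrank UNIV (mat 1) (mat 1)) = 0"
    using assms unfolding KR_def by blast
  moreover have "A ** (0::'a^'n^'n) = 0" by (simp add: vec_eq_iff matrix_matrix_mult_def)
  ultimately show ?thesis by (simp add: lowrank_UNIV)
qed

lemma K0:
  fixes A :: "'a::comm_ring_1^'n^'n"
  assumes "x * det A = 0" shows "KL x A 0" "KR x A 0"
  using assms unfolding KL_def KR_def
  by (auto simp: lowrank_empty det_mul) (metis mult.left_commute mult_zero_right mult.commute)+

lemma add_rc: "(a::'b::ab_semigroup_add) + b + c = a + c + b"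
  by (simp add: ac_simps)

lemma outer_axis_mult:
  fixes A :: "'a::comm_ring_1^'n^'n"
  shows "(W + outer y (axis i 1)) ** A = W ** A + outer y (\<chi> j. A$i$j)"
proof -
  have "(\<Sum>k\<in>UNIV. (W$a$k + y$a * axis i 1 $ k) * A$k$b) = (\<Sum>k\<in>UNIV. W$a$k * A$k$b) + y$a * A$i$b" for a b
  proof -
    have "(\<Sum>k\<in>UNIV. (W$a$k + y$a * axis i 1 $ k) * A$k$b) = (\<Sum>k\<in>UNIV. W$a$k * A$k$b) + (\<Sum>k\<in>UNIV. y$a * axis i 1 $ k * A$k$b)"
      by (simp add: distrib_right sum.distrib)
    also have "(\<Sum>k\<in>UNIV. y$a * axis i 1 $ k * A$k$b) = (\<Sum>k\<in>UNIV. if k = i then y$a * A$i$b else 0)"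
      by (rule sum.cong) (auto simp: axis_def)
    finally show ?thesis by simp
  qed
  then show ?thesis by (simp add: vec_eq_iff matrix_matrix_mult_def outer_def)
qed

lemma mult_outer_axis:
  fixes A :: "'a::comm_ring_1^'n^'n"
  shows "A ** (W + outer (axis j 1) z) = A ** W + outer (\<chi> r. A$r$j) z"
proof -
  have "(\<Sum>k\<in>UNIV. A$a$k * (W$k$b + axis j 1 $ k * z$b)) = (\<Sum>k\<in>UNIV. A$a$k * W$k$b) + A$a$j * z$b" for a b
  proof -
    have "(\<Sum>k\<in>UNIV. A$a$k * (W$k$b + axis j 1 $ k * z$b)) = (\<Sum>k\<in>UNIV. A$a$k * W$k$b) + (\<Sum>k\<in>UNIV. A$a$k * (axis j 1 $ k * z$b))"
      by (simp add: distrib_left sum.distrib)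
    also have "(\<Sum>k\<in>UNIV. A$a$k * (axis j 1 $ k * z$b)) = (\<Sum>k\<in>UNIV. if k = j then A$a$j * z$b else 0)"
      by (rule sum.cong) (auto simp: axis_def)
    finally show ?thesis by simp
  qed
  then show ?thesis by (simp add: vec_eq_iff matrix_matrix_mult_def outer_def)
qed

lemma Lvec:
  fixes A :: "'a::comm_ring_1^'n^'n"
  assumes K: "KL x A a" and c: "card S \<le> Suc a" and nz: "x * det (W ** A + lowrank S Y Z) \<noteq> 0"
  shows "\<exists>h z. (\<forall>i. x * (\<Sum>k\<in>UNIV. A$i$k * h$k) = 0) \<and>
          x * (\<Sum>j\<in>UNIV. z$j * h$j) = x * det (W ** A + lowrank S Y Z)"
proof -
  have "S \<noteq> {}"
  proof
    assume "S = {}"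
    then have "x * det (W ** A + lowrank S Y Z) = 0" using K unfolding KL_def by auto
    then show False using nz by simp
  qed
  then obtain s0 where s0: "s0 \<in> S" by blast
  define N where "N = W ** A + lowrank (S - {s0}) Y Z"
  define y where "y = (\<chi> i. Y$i$s0)"
  define z where "z = (\<chi> j. Z$s0$j)"
  define h where "h = (\<chi> j. \<Sum>k\<in>UNIV. adjm N$j$k * y$k)"
  have cS: "card (S - {s0}) \<le> a" using c s0 by (simp add: card_Diff_singleton)
  have xN: "x * det N = 0" using K cS unfolding KL_def N_def by auto
  have M: "W ** A + lowrank S Y Z = N + outer y z"
    unfolding N_def y_def z_def lowrank_split[OF s0] by (simp add: add.assoc)
  have form: "(\<Sum>j\<in>UNIV. \<Sum>k\<in>UNIV. u$j * adjm N$j$k * y$k) = (\<Sum>j\<in>UNIV. u$j * h$j)" for u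
    by (simp add: h_def sum_distrib_left mult.assoc)
  have "x * (\<Sum>j\<in>UNIV. z$j * h$j) = x * det (W ** A + lowrank S Y Z)"
    unfolding M det_rank1 form using xN by (simp add: distrib_left)
  moreover have "x * (\<Sum>k\<in>UNIV. A$i$k * h$k) = 0" for i
  proof -
    define u where "u = (\<chi> j. A$i$j)"
    have eq: "N + outer y u = (W + outer y (axis i 1)) ** A + lowrank (S - {s0}) Y Z"
      unfolding outer_axis_mult N_def u_def by (rule add_rc)
    have "x * det ((W + outer y (axis i 1)) ** A + lowrank (S - {s0}) Y Z) = 0"
      by (rule K[unfolded KL_def, rule_format, OF cS])
    then have "x * det (N + outer y u) = 0" unfolding eq .
    then show ?thesis unfolding det_rank1 form using xN by (simp add: u_def distrib_left)
  qed
  ultimately show ?thesis by blast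
qed


lemma Rvec:
  fixes A :: "'a::comm_ring_1^'n^'n"
  assumes K: "KR x A b" and K1: "KR x1 A b" and c: "card S \<le> Suc b"
    and nz: "x1 * det (A ** W + lowrank S Y Z) \<noteq> 0"
  shows "\<exists>q y. (\<forall>j. x * (\<Sum>k\<in>UNIV. q$k * A$k$j) = 0) \<and>
          x1 * (\<Sum>k\<in>UNIV. q$k * y$k) = x1 * det (A ** W + lowrank S Y Z)"
proof -
  have "S \<noteq> {}"
  proof
    assume "S = {}"
    then have "x1 * det (A ** W + lowrank S Y Z) = 0" using K1 unfolding KR_def by auto
    then show False using nz by simp
  qed
  then obtain s0 where s0: "s0 \<in> S" by blast
  define N where "N = A ** W + lowrank (S - {s0}) Y Z"
  define y where "y = (\<chi> i. Y$i$s0)"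
  define z where "z = (\<chi> j. Z$s0$j)"
  define q where "q = (\<chi> k. \<Sum>j\<in>UNIV. z$j * adjm N$j$k)"
  have cS: "card (S - {s0}) \<le> b" using c s0 by (simp add: card_Diff_singleton)
  have xN: "x * det N = 0" using K cS unfolding KR_def N_def by auto
  have x1N: "x1 * det N = 0" using K1 cS unfolding KR_def N_def by auto
  have M: "A ** W + lowrank S Y Z = N + outer y z"
    unfolding N_def y_def z_def lowrank_split[OF s0] by (simp add: add.assoc)
  have form: "(\<Sum>j\<in>UNIV. \<Sum>k\<in>UNIV. z$j * adjm N$j$k * v$k) = (\<Sum>k\<in>UNIV. q$k * v$k)" for v
    by (subst sum.swap) (simp add: q_def sum_distrib_right)
  have "x1 * (\<Sum>k\<in>UNIV. q$k * y$k) = x1 * det (A ** W + lowrank S Y Z)"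
    unfolding M det_rank1 form using x1N by (simp add: distrib_left)
  moreover have "x * (\<Sum>k\<in>UNIV. q$k * A$k$j) = 0" for j
  proof -
    define v where "v = (\<chi> r. A$r$j)"
    have eq: "N + outer v z = A ** (W + outer (axis j 1) z) + lowrank (S - {s0}) Y Z"
      unfolding mult_outer_axis N_def v_def by (rule add_rc)
    have "x * det (A ** (W + outer (axis j 1) z) + lowrank (S - {s0}) Y Z) = 0"
      by (rule K[unfolded KR_def, rule_format, OF cS])
    then have "x * det (N + outer v z) = 0" unfolding eq .
    then show ?thesis unfolding det_rank1 form using xN by (simp add: v_def distrib_left)
  qed
  ultimately show ?thesis by blast
qed

definition goodX :: "'a \<Rightarrow> ('a::comm_ring_1)^'n^'n \<Rightarrow> bool" where
  "goodX x A \<longleftrightarrow> (\<exists>X. X \<noteq> 0 \<and> A ** X = 0 \<and> X ** A = 0 \<and> (\<forall>r i j. r * x = 0 \<longrightarrow> r * X$i$j = 0))"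

lemma goodX_mono: "goodX (x * t) A \<Longrightarrow> goodX x A"
  unfolding goodX_def by (metis mult.assoc mult_zero_left)

lemma claim_aux:
  fixes A :: "'a::comm_ring_1^'n^'n"
  shows "\<forall>a b x. 2 * CARD('n) - (a + b) = m \<longrightarrow> KL x A a \<longrightarrow> KR x A b \<longrightarrow> x \<noteq> 0 \<longrightarrow> goodX x A"
proof (induction m rule: less_induct)
  case (less m)
  show ?case
  proof (intro allI impI)
    fix a b x
    assume m: "2 * CARD('n) - (a + b) = m" and KLa: "KL x A a" and KRb: "KR x A b" and x0: "x \<noteq> 0"
    have a: "a < CARD('n)" using KL_big[OF KLa] x0 by force
    have b: "b < CARD('n)" using KR_big[OF KRb] x0 by force
    have IHa: "goodX x' A" if "KL x' A (Suc a)" "KR x' A b" "x' \<noteq> 0" for x'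
    proof -
      have lt: "2 * CARD('n) - (Suc a + b) < m" using a b m by simp
      show ?thesis using less.IH[OF lt, rule_format, of "Suc a" b x'] that by simp
    qed
    have IHb: "goodX x' A" if "KL x' A a" "KR x' A (Suc b)" "x' \<noteq> 0" for x'
    proof -
      have lt: "2 * CARD('n) - (a + Suc b) < m" using a b m by simp
      show ?thesis using less.IH[OF lt, rule_format, of a "Suc b" x'] that by simp
    qed
    show "goodX x A"
    proof (cases "KL x A (Suc a)")
      case True
      then show ?thesis using IHa KRb x0 by blast
    next
      case False
      then obtain W S Y Z where c: "card S \<le> Suc a" and nz: "x * det (W ** A + lowrank S Y Z) \<noteq> 0"
        unfolding KL_def by blast
      define s where "s = det (W ** A + lowrank S Y Z)"
      obtain h z where hA: "\<forall>i. x * (\<Sum>k\<in>UNIV. A$i$k * h$k) = 0"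
        and hz: "x * (\<Sum>j\<in>UNIV. z$j * h$j) = x * s"
        using Lvec[OF KLa c nz] unfolding s_def by blast
      define x1 where "x1 = x * s"
      have x10: "x1 \<noteq> 0" using nz unfolding x1_def s_def .
      have KL1: "KL x1 A a" using KL_mono[OF KLa, of s] unfolding x1_def by (simp add: mult.commute)
      have KR1: "KR x1 A b" using KR_mono[OF KRb, of s] unfolding x1_def by (simp add: mult.commute)
      show ?thesis
      proof (cases "KL x1 A (Suc a) \<or> KR x1 A (Suc b)")
        case True
        then have "goodX x1 A" using IHa IHb KL1 KR1 x10 by blast
        then show ?thesis using goodX_mono unfolding x1_def by blast
      next
        case False
        then obtain W' S' Y' Z' where c': "card S' \<le> Suc b" and nz': "x1 * det (A ** W' + lowrank S' Y' Z') \<noteq> 0"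
          unfolding KR_def by blast
        obtain q y where qA: "\<forall>j. x * (\<Sum>k\<in>UNIV. q$k * A$k$j) = 0"
          and qy: "x1 * (\<Sum>k\<in>UNIV. q$k * y$k) = x1 * det (A ** W' + lowrank S' Y' Z')"
          using Rvec[OF KRb KR1 c' nz'] by blast
        define X where "X = (\<chi> i j. x * h$i * q$j)"
        have AX: "A ** X = 0"
        proof -
          have "(\<Sum>k\<in>UNIV. A$i$k * (x * h$k * q$j)) = q$j * (x * (\<Sum>k\<in>UNIV. A$i$k * h$k))" for i j
            by (simp add: sum_distrib_left ac_simps)
          then show ?thesis using hA by (simp add: vec_eq_iff matrix_matrix_mult_def X_def)
        qed
        have XA: "X ** A = 0"
        proof -
          have "(\<Sum>k\<in>UNIV. (x * h$i * q$k) * A$k$j) = h$i * (x * (\<Sum>k\<in>UNIV. q$k * A$k$j))" for i j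
            by (simp add: sum_distrib_left ac_simps)
          then show ?thesis using qA by (simp add: vec_eq_iff matrix_matrix_mult_def X_def)
        qed
        have "X \<noteq> 0"
        proof
          assume X0: "X = 0"
          have "(\<Sum>i\<in>UNIV. \<Sum>j\<in>UNIV. z$i * X$i$j * y$j) = (x * (\<Sum>i\<in>UNIV. z$i * h$i)) * (\<Sum>j\<in>UNIV. q$j * y$j)"
            by (simp add: X_def sum_distrib_left sum_distrib_right ac_simps)
          also have "\<dots> = x1 * (\<Sum>j\<in>UNIV. q$j * y$j)" using hz unfolding x1_def by simp
          also have "\<dots> \<noteq> 0" using qy nz' by simp
          finally show False using X0 by simp
        qed
        moreover have "\<forall>r i j. r * x = 0 \<longrightarrow> r * X$i$j = 0"
          by (simp add: X_def) (metis mult.assoc mult_zero_left)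
        ultimately show ?thesis unfolding goodX_def using AX XA by blast
      qed
    qed
  qed
qed

lemma lemmaM:
  fixes A :: "'a::comm_ring_1^'n^'n"
  assumes "x \<noteq> 0" "x * det A = 0"
  shows "goodX x A"
  using claim_aux[of "2 * CARD('n)" A, rule_format, of 0 0 x] K0[OF assms(2)] assms(1) by simp


lemma transpose_zero': "transpose (0::'a::comm_ring_1^'n^'n) = 0"
  by (simp add: vec_eq_iff transpose_def)

lemma zero_mult_mat: "(0::'a::comm_ring_1^'n^'n) ** B = 0"
  by (simp add: vec_eq_iff matrix_matrix_mult_def)

lemma O2:
  fixes A X :: "'a::comm_ring_1^'n^'n"
  assumes "A ** X = 0" shows "det A * X$i$j = 0"
proof -
  let ?At = "transpose A" and ?Xt = "transpose X"
  have "?Xt ** ?At = 0" using assms by (simp add: matrix_transpose_mul[symmetric] transpose_zero')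
  then have "(?Xt ** ?At) ** adjm ?At = 0" by (simp add: zero_mult_mat)
  then have "(?Xt ** (?At ** adjm ?At)) $ j $ i = 0" by (simp add: matrix_mul_assoc)
  moreover have "(?Xt ** (?At ** adjm ?At)) $ j $ i = ?Xt $ j $ i * det ?At"
  proof -
    have g: "(?Xt ** M) $ j $ i = (\<Sum>m\<in>UNIV. ?Xt$j$m * M$m$i)" for M
      by (simp add: matrix_matrix_mult_def)
    have "(?Xt ** (?At ** adjm ?At)) $ j $ i = (\<Sum>m\<in>UNIV. ?Xt$j$m * (if m = i then det ?At else 0))"
      unfolding g mul_adjm ..
    also have "\<dots> = (\<Sum>m\<in>UNIV. if m = i then ?Xt$j$i * det ?At else 0)"
      by (rule sum.cong) auto
    finally show ?thesis by simp
  qed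
  moreover have "?Xt $ j $ i = X $ i $ j" by (simp add: transpose_def)
  moreover have "det ?At = det A" by simp
  ultimately show ?thesis by (metis mult.commute)
qed

lemma reach_step:
  assumes "\<exists>j\<le>k. (orth_adj ^^ j) a b" "b = c \<or> orth_adj b c"
  shows "\<exists>j\<le>Suc k. (orth_adj ^^ j) a c"
proof -
  obtain j where j: "j \<le> k" "(orth_adj ^^ j) a b" using assms(1) by blast
  show ?thesis
  proof (cases "b = c")
    case True
    then show ?thesis using j by (intro exI[of _ j]) auto
  next
    case False
    then have "orth_adj b c" using assms(2) by blast
    then have "(orth_adj ^^ Suc j) a c" using j(2) by (rule relpowp_Suc_I[rotated])
    then show ?thesis using j(1) by (intro exI[of _ "Suc j"]) auto
  qed
qed

lemma dist_le3:
  fixes A1 A2 X Y :: "('a::comm_ring_1)^'n^'n"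
  assumes v: "two_sided_zd A1" "two_sided_zd A2" and nz: "X \<noteq> 0" "Y \<noteq> 0"
   and o: "A1 ** X = 0" "X ** A1 = 0" "X ** Y = 0" "Y ** X = 0" "Y ** A2 = 0" "A2 ** Y = 0"
  shows "orth_dist A1 A2 \<le> 3"
proof -
  have A1: "A1 \<noteq> 0" "A2 \<noteq> 0" using v unfolding two_sided_zd_def by auto
  have vX: "two_sided_zd X" unfolding two_sided_zd_def
  proof (intro conjI)
    show "X \<noteq> 0" using nz by simp
    show "\<exists>B::'a^'n^'n. B \<noteq> 0 \<and> X ** B = 0" using A1(1) o(2) by (intro exI[of _ A1] conjI)
    show "\<exists>C::'a^'n^'n. C \<noteq> 0 \<and> C ** X = 0" using A1(1) o(1) by (intro exI[of _ A1] conjI)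
  qed
  have vY: "two_sided_zd Y" unfolding two_sided_zd_def
  proof (intro conjI)
    show "Y \<noteq> 0" using nz by simp
    show "\<exists>B::'a^'n^'n. B \<noteq> 0 \<and> Y ** B = 0" using A1(2) o(5) by (intro exI[of _ A2] conjI)
    show "\<exists>C::'a^'n^'n. C \<noteq> 0 \<and> C ** Y = 0" using A1(2) o(6) by (intro exI[of _ A2] conjI)
  qed
  have e1: "A1 = X \<or> orth_adj A1 X" unfolding orth_adj_def using v(1) vX o(1,2) by auto
  have e2: "X = Y \<or> orth_adj X Y" unfolding orth_adj_def using vX vY o(3,4) by auto
  have e3: "Y = A2 \<or> orth_adj Y A2" unfolding orth_adj_def using v(2) vY o(5,6) by auto
  have r0: "\<exists>j\<le>0. (orth_adj ^^ j) A1 A1" by (rule exI[of _ 0]) simp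
  have "\<exists>j\<le>Suc (Suc (Suc 0)). (orth_adj ^^ j) A1 A2"
    by (rule reach_step[OF reach_step[OF reach_step[OF r0 e1] e2] e3])
  then obtain j where j: "j \<le> 3" "(orth_adj ^^ j) A1 A2" by (auto simp: numeral_3_eq_3)
  have "orth_dist A1 A2 \<le> enat j"
    unfolding orth_dist_def by (rule INF_lower) (use j in auto)
  also have "enat j \<le> 3" using j(1) by (simp add: numeral_eq_enat)
  finally show ?thesis .
qed

lemma zd_det:
  fixes P :: "('a::comm_ring_1)^'n^'n"
  assumes "two_sided_zd P" shows "\<exists>w. w \<noteq> 0 \<and> w * det P = 0"
proof -
  obtain B :: "'a^'n^'n" where B: "B \<noteq> 0" "P ** B = 0" using assms unfolding two_sided_zd_def by blast
  have "\<exists>i j. B$i$j \<noteq> 0"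
  proof (rule ccontr)
    assume "\<not> (\<exists>i j. B$i$j \<noteq> 0)"
    then have "B = 0" by (simp add: vec_eq_iff)
    then show False using B(1) by simp
  qed
  then obtain i j where ij: "B$i$j \<noteq> 0" by blast
  have "det P * B$i$j = 0" using O2[OF B(2)] .
  then have "B$i$j * det P = 0" by (simp add: mult.commute)
  then show ?thesis using ij by blast
qed

lemma H:
  fixes P Q :: "('a::comm_ring_1)^'n^'n"
  assumes "two_sided_zd P" "z * det Q = 0" "z * det P \<noteq> 0"
  shows "\<exists>X Y. X \<noteq> 0 \<and> Y \<noteq> 0 \<and> P ** X = 0 \<and> X ** P = 0 \<and> X ** Y = 0 \<and> Y ** X = 0 \<and> Y ** Q = 0 \<and> Q ** Y = 0"
proof -
  obtain w where w: "w \<noteq> 0" "w * det P = 0" using zd_det[OF assms(1)] by blast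
  obtain X :: "'a^'n^'n" where X: "X \<noteq> 0" "P ** X = 0" "X ** P = 0" using lemmaM[OF w] unfolding goodX_def by blast
  have "(z * det P) * det Q = det P * (z * det Q)" by (simp add: ac_simps)
  then have "(z * det P) * det Q = 0" using assms(2) by simp
  then obtain Y :: "'a^'n^'n" where Y: "Y \<noteq> 0" "Q ** Y = 0" "Y ** Q = 0"
      and Yp: "\<forall>r i j. r * (z * det P) = 0 \<longrightarrow> r * Y$i$j = 0"
    using lemmaM[OF assms(3)] unfolding goodX_def by blast
  have p: "X$i$k * Y$l$j = 0" for i k l j
  proof -
    have "X$i$k * (z * det P) = z * (det P * X$i$k)" by (simp add: ac_simps)
    also have "\<dots> = 0" using O2[OF X(2)] by simp
    finally show ?thesis using Yp by blast
  qed
  have XY: "X ** Y = 0" using p by (simp add: vec_eq_iff matrix_matrix_mult_def)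
  have YX: "Y ** X = 0" using p by (simp add: vec_eq_iff matrix_matrix_mult_def mult.commute)
  show ?thesis using X Y XY YX by blast
qed

lemma P2:
  fixes A1 A2 :: "('a::comm_ring_1)^'n^'n"
  assumes "x \<noteq> 0" "y \<noteq> 0" "x * det A1 = 0" "y * det A2 = 0" "x * y = 0"
  shows "\<exists>X Y. X \<noteq> 0 \<and> Y \<noteq> 0 \<and> A1 ** X = 0 \<and> X ** A1 = 0 \<and> X ** Y = 0 \<and> Y ** X = 0 \<and> Y ** A2 = 0 \<and> A2 ** Y = 0"
proof -
  obtain X :: "'a^'n^'n" where X: "X \<noteq> 0" "A1 ** X = 0" "X ** A1 = 0"
      and Xp: "\<forall>r i j. r * x = 0 \<longrightarrow> r * X$i$j = 0"
    using lemmaM[OF assms(1,3)] unfolding goodX_def by blast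
  obtain Y :: "'a^'n^'n" where Y: "Y \<noteq> 0" "A2 ** Y = 0" "Y ** A2 = 0"
      and Yp: "\<forall>r i j. r * y = 0 \<longrightarrow> r * Y$i$j = 0"
    using lemmaM[OF assms(2,4)] unfolding goodX_def by blast
  have p: "X$i$k * Y$l$j = 0" for i k l j
  proof -
    have "y * X$i$k = 0" using Xp assms(5) by (metis mult.commute)
    then have "X$i$k * y = 0" by (simp add: mult.commute)
    then show ?thesis using Yp by blast
  qed
  have XY: "X ** Y = 0" using p by (simp add: vec_eq_iff matrix_matrix_mult_def)
  have YX: "Y ** X = 0" using p by (simp add: vec_eq_iff matrix_matrix_mult_def mult.commute)
  show ?thesis using X Y XY YX by blast
qed

theorem lemma4:
  fixes A1 A2 :: "('a::comm_ring_1)^'n^'n"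
  assumes "CARD('n) > 1"
    and "two_sided_zd A1" and "two_sided_zd A2"
    and "orth_dist A1 A2 > 3"
  shows "ann (det A1) = ann (det A2) \<and>
         (\<forall>x\<in>ann (det A1). \<forall>y\<in>ann (det A1). x \<noteq> 0 \<and> y \<noteq> 0 \<longrightarrow> x * y \<noteq> 0)"
proof -
  have far: False if "X \<noteq> 0" "Y \<noteq> 0" "A1 ** X = 0" "X ** A1 = 0" "X ** Y = 0" "Y ** X = 0"
      "Y ** A2 = 0" "A2 ** Y = 0" for X Y :: "'a^'n^'n"
    using dist_le3[OF assms(2,3) that] assms(4) by simp
  have sub1: "ann (det A1) \<subseteq> ann (det A2)"
  proof
    fix x assume "x \<in> ann (det A1)"
    then have x1: "x * det A1 = 0" by (simp add: ann_def mult.commute)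
    show "x \<in> ann (det A2)"
    proof (rule ccontr)
      assume "x \<notin> ann (det A2)"
      then have "x * det A2 \<noteq> 0" by (simp add: ann_def mult.commute)
      from H[OF assms(3) x1 this] far show False by blast
    qed
  qed
  have sub2: "ann (det A2) \<subseteq> ann (det A1)"
  proof
    fix x assume "x \<in> ann (det A2)"
    then have x1: "x * det A2 = 0" by (simp add: ann_def mult.commute)
    show "x \<in> ann (det A1)"
    proof (rule ccontr)
      assume "x \<notin> ann (det A1)"
      then have "x * det A1 \<noteq> 0" by (simp add: ann_def mult.commute)
      from H[OF assms(2) x1 this] far show False by blast
    qed
  qed
  have part2: "x * y \<noteq> 0" if "x \<in> ann (det A1)" "y \<in> ann (det A1)" "x \<noteq> 0" "y \<noteq> 0" for x y
  proof
    assume xy: "x * y = 0"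
    have "y \<in> ann (det A2)" using sub1 that by blast
    then have "y * det A2 = 0" by (simp add: ann_def mult.commute)
    moreover have "x * det A1 = 0" using that by (simp add: ann_def mult.commute)
    ultimately show False using P2[OF that(3,4) _ _ xy] far by blast
  qed
  show ?thesis using sub1 sub2 part2 by blast
qed

end
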